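(* For every $\varepsilon>0$ there exists $\delta>0$, depending only on $\varepsilon$, such that the following holds for all sufficiently large $N_0$. If $G$ is a bichromatic graph whose underlying graph is the complete bipartite graph $K_{N_0,N_0}$ and $G$ is $\varepsilon$-color-balanced, then at least one of the left vertex-pair incidence graph $H_L$ and the right vertex-pair incidence graph $H_R$ of $G$ has at least $\delta N_0^3$ edges.
   Context: A bichromatic graph is a triple $G=(V,R,B)$ with $R,B\subseteq\binom{V}{2}$, $R\cap B=\emptyset$ (red and blue edges); its underlying graph is $(V,R\cup B)$. $d_R(G)=|R|/(|R|+|B|)$, and $G$ is $\varepsilon$-color-balanced if $\varepsilon\le d_R(G)\le 1-\varepsilon$. For a bipartite bichromatic graph $G$ with bipartition $V=V_1\sqcup V_2$, the left vertex-pair incidence graph $H_L$ is the bipartite graph with vertex set $V_1\sqcup\binom{V_2}{2}$ in which $u\in V_1$ is adjacent to $\{v_1,v_2\}\in\binom{V_2}{2}$ if and only if $uv_1$ and $uv_2$ are both edges of $G$ and they have different colours. The right vertex-pair incidence graph $H_R$ is defined in the same way with the roles of $V_1$ and $V_2$ swapped (vertex set $V_2\sqcup\binom{V_1}{2}$). *)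

theory Defs
  imports Complex_Main
begin

definition bichromatic :: "'a set \<Rightarrow> 'a set set \<Rightarrow> 'a set set \<Rightarrow> bool" where
  "bichromatic V R B \<longleftrightarrow>
     R \<subseteq> {e. e \<subseteq> V \<and> card e = 2} \<and> B \<subseteq> {e. e \<subseteq> V \<and> card e = 2} \<and> R \<inter> B = {}"

definition complete_bipartite_edges :: "'a set \<Rightarrow> 'a set \<Rightarrow> 'a set set" where
  "complete_bipartite_edges V1 V2 = {{u, v} | u v. u \<in> V1 \<and> v \<in> V2}"

definition red_density :: "'a set set \<Rightarrow> 'a set set \<Rightarrow> real" where
  "red_density R B = real (card R) / (real (card R) + real (card B))"

definition color_balanced :: "real \<Rightarrow> 'a set set \<Rightarrow> 'a set set \<Rightarrow> bool" where
  "color_balanced \<epsilon> R B \<longleftrightarrow> \<epsilon> \<le> red_density R B \<and> red_density R B \<le> 1 - \<epsilon>"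

definition left_incidence_edges ::
  "'a set \<Rightarrow> 'a set \<Rightarrow> 'a set set \<Rightarrow> 'a set set \<Rightarrow> ('a \<times> 'a set) set" where
  "left_incidence_edges V1 V2 R B =
     {(u, p) | u p. u \<in> V1 \<and> p \<subseteq> V2 \<and> card p = 2 \<and>
        (\<exists>v1 v2. p = {v1, v2} \<and>
           (({u, v1} \<in> R \<and> {u, v2} \<in> B) \<or> ({u, v1} \<in> B \<and> {u, v2} \<in> R)))}"

definition right_incidence_edges ::
  "'a set \<Rightarrow> 'a set \<Rightarrow> 'a set set \<Rightarrow> 'a set set \<Rightarrow> ('a \<times> 'a set) set" where
  "right_incidence_edges V1 V2 R B = left_incidence_edges V2 V1 R B"

end

theory Submission
  imports Defs
begin

lemma card_edges_pairs:
  assumes "V1 \<inter> V2 = {}" "S \<subseteq> complete_bipartite_edges V1 V2"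
  shows "card S = card {(u,v). (u,v) \<in> V1 \<times> V2 \<and> {u,v} \<in> S}"
proof -
  define A where "A = {(u,v). (u,v) \<in> V1 \<times> V2 \<and> {u,v} \<in> S}"
  have "S = (\<lambda>(u,v). {u,v}) ` {(u,v). (u,v) \<in> V1 \<times> V2 \<and> {u,v} \<in> S}"
  proof
    show "S \<subseteq> (\<lambda>(u,v). {u,v}) ` {(u,v). (u,v) \<in> V1 \<times> V2 \<and> {u,v} \<in> S}"
    proof
      fix e assume e: "e \<in> S"
      then obtain u v where "e = {u,v}" "u \<in> V1" "v \<in> V2"
        using assms(2) by (auto simp: complete_bipartite_edges_def)
      then show "e \<in> (\<lambda>(u,v). {u,v}) ` {(u,v). (u,v) \<in> V1 \<times> V2 \<and> {u,v} \<in> S}"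
        using e by (auto intro!: image_eqI[where x="(u,v)"])
    qed
  qed auto
  moreover have "inj_on (\<lambda>(u,v). {u,v}) {(u,v). (u,v) \<in> V1 \<times> V2 \<and> {u,v} \<in> S}"
  proof (rule inj_onI)
    fix x y assume x: "x \<in> {(u,v). (u,v) \<in> V1 \<times> V2 \<and> {u,v} \<in> S}"
      and y: "y \<in> {(u,v). (u,v) \<in> V1 \<times> V2 \<and> {u,v} \<in> S}"
      and e: "(\<lambda>(u,v). {u,v}) x = (\<lambda>(u,v). {u,v}) y"
    obtain a b where ab: "x = (a,b)" by fastforce
    obtain c d where cd: "y = (c,d)" by fastforce
    have m: "a \<in> V1" "b \<in> V2" "c \<in> V1" "d \<in> V2" using x y ab cd by auto
    have "{a,b} = {c,d}" using e ab cd by simp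
    then have "(a = c \<and> b = d) \<or> (a = d \<and> b = c)" by (simp add: doubleton_eq_iff)
    moreover have "a \<noteq> d" using m assms(1) by blast
    ultimately show "x = y" using ab cd by blast
  qed
  ultimately have eq: "S = (\<lambda>(u,v). {u,v}) ` A" and inj: "inj_on (\<lambda>(u,v). {u,v}) A"
    unfolding A_def by simp_all
  have "card S = card A" by (subst eq) (rule card_image[OF inj])
  then show ?thesis unfolding A_def .
qed

lemma key_ineq:
  fixes V1 V2 :: "'a set"
  assumes fin: "finite V1" "finite V2" and cV1: "card V1 = n" and cV2: "card V2 = n"
    and RB: "R \<inter> B = {}"
  defines "PR \<equiv> {(u,v). (u,v) \<in> V1 \<times> V2 \<and> {u,v} \<in> R}"
    and "PB \<equiv> {(u,v). (u,v) \<in> V1 \<times> V2 \<and> {u,v} \<in> B}"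
    and "L \<equiv> left_incidence_edges V1 V2 R B"
    and "Rt \<equiv> right_incidence_edges V1 V2 R B"
  assumes cov: "\<And>u v. u \<in> V1 \<Longrightarrow> v \<in> V2 \<Longrightarrow> {u,v} \<in> R \<or> {u,v} \<in> B"
  shows "card PR * card PB \<le> n * (card L + card Rt)"
proof -
  define f where "f = (\<lambda>((u::'a,v::'a),(u'::'a,v'::'a)). if {u,v'} \<in> B then Inl ((u,{v,v'}),u')
      else Inr ((v',{u,u'}),v))"
  define T where "T = Inl ` (L \<times> V1) \<union> Inr ` (Rt \<times> V2)"
  have sL: "L \<subseteq> V1 \<times> Pow V2" by (auto simp: L_def left_incidence_edges_def)
  have finL: "finite L"
    using finite_subset[OF sL] fin by (simp add: finite_cartesian_product)
  have sRt: "Rt \<subseteq> V2 \<times> Pow V1"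
    by (auto simp: Rt_def right_incidence_edges_def left_incidence_edges_def)
  have finRt: "finite Rt"
    using finite_subset[OF sRt] fin by (simp add: finite_cartesian_product)
  have finT: "finite T" unfolding T_def using finL finRt fin by auto
  have dis: "\<And>x. x \<in> R \<Longrightarrow> x \<in> B \<Longrightarrow> False" using RB by auto
  have sub: "f ` (PR \<times> PB) \<subseteq> T"
  proof
    fix y assume "y \<in> f ` (PR \<times> PB)"
    then obtain u v u' v' where x: "(u,v) \<in> PR" "(u',v') \<in> PB" and y: "y = f ((u,v),(u',v'))"
      by auto
    have m: "u \<in> V1" "v \<in> V2" "u' \<in> V1" "v' \<in> V2" "{u,v} \<in> R" "{u',v'} \<in> B"
      using x by (auto simp: PR_def PB_def)
    show "y \<in> T"
    proof (cases "{u,v'} \<in> B")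
      case True
      have "v \<noteq> v'" using True m dis by auto
      then have "(u,{v,v'}) \<in> L" using m True
        unfolding L_def left_incidence_edges_def by auto
      then show ?thesis using y True m unfolding f_def T_def by auto
    next
      case False
      then have r: "{v',u} \<in> R" using cov[OF m(1) m(4)] by (simp add: insert_commute)
      have b: "{v',u'} \<in> B" using m by (simp add: insert_commute)
      have "u \<noteq> u'" using r b dis by auto
      then have "(v',{u,u'}) \<in> Rt" using m r b
        unfolding Rt_def right_incidence_edges_def left_incidence_edges_def by auto
      then show ?thesis using y False m unfolding f_def T_def by auto
    qed
  qed
  have inj: "inj_on f (PR \<times> PB)"
  proof (rule inj_onI)
    fix x1 x2 assume x1: "x1 \<in> PR \<times> PB" and x2: "x2 \<in> PR \<times> PB" and eq: "f x1 = f x2"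
    obtain u1 v1 u1' v1' where e1: "x1 = ((u1,v1),(u1',v1'))" by (metis prod.collapse)
    obtain u2 v2 u2' v2' where e2: "x2 = ((u2,v2),(u2',v2'))" by (metis prod.collapse)
    have m1: "{u1,v1} \<in> R" "{u1',v1'} \<in> B" using x1 e1 by (auto simp: PR_def PB_def)
    have m2: "{u2,v2} \<in> R" "{u2',v2'} \<in> B" using x2 e2 by (auto simp: PR_def PB_def)
    show "x1 = x2"
    proof (cases "{u1,v1'} \<in> B")
      case T1: True
      show ?thesis
      proof (cases "{u2,v2'} \<in> B")
        case T2: True
        from eq have "u1 = u2" "{v1,v1'} = {v2,v2'}" "u1' = u2'"
          unfolding e1 e2 f_def using T1 T2 by auto
        then show ?thesis using e1 e2 m1 m2 T1 T2 dis
          by (auto simp: doubleton_eq_iff)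
      next
        case False
        from eq show ?thesis unfolding e1 e2 f_def using T1 False by auto
      qed
    next
      case F1: False
      show ?thesis
      proof (cases "{u2,v2'} \<in> B")
        case True
        from eq show ?thesis unfolding e1 e2 f_def using F1 True by auto
      next
        case F2: False
        from eq have "v1' = v2'" "{u1,u1'} = {u2,u2'}" "v1 = v2"
          unfolding e1 e2 f_def using F1 F2 by auto
        then show ?thesis using e1 e2 m1 m2 F1 F2 dis
          by (auto simp: doubleton_eq_iff insert_commute)
      qed
    qed
  qed
  have "card PR * card PB = card (PR \<times> PB)" by (simp add: card_cartesian_product)
  also have "\<dots> \<le> card T" using card_inj_on_le[OF inj sub finT] .
  also have "\<dots> \<le> card (Inl ` (L \<times> V1) :: (('a \<times> 'a set) \<times> 'a + ('a \<times> 'a set) \<times> 'a) set)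
      + card (Inr ` (Rt \<times> V2) :: (('a \<times> 'a set) \<times> 'a + ('a \<times> 'a set) \<times> 'a) set)"
    unfolding T_def by (rule card_Un_le)
  also have "\<dots> = card L * n + card Rt * n"
    by (simp add: card_image card_cartesian_product cV1 cV2)
  finally show ?thesis by (simp add: algebra_simps)
qed

theorem lemma4p2:
  fixes \<epsilon> :: real
  assumes "\<epsilon> > 0"
  shows "\<exists>\<delta>>0. \<exists>N. \<forall>N0 \<ge> N. \<forall>(V1 :: nat set) V2 R B.
     finite V1 \<and> finite V2 \<and> V1 \<inter> V2 = {} \<and> card V1 = N0 \<and> card V2 = N0 \<and>
     bichromatic (V1 \<union> V2) R B \<and>
     R \<union> B = complete_bipartite_edges V1 V2 \<and>
     color_balanced \<epsilon> R B
     \<longrightarrow> real (card (left_incidence_edges V1 V2 R B)) \<ge> \<delta> * real N0 ^ 3 \<or>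
         real (card (right_incidence_edges V1 V2 R B)) \<ge> \<delta> * real N0 ^ 3"
proof (intro exI[of _ "\<epsilon>^2/2"] conjI exI[of _ 0] allI impI)
  show "\<epsilon>^2/2 > 0" using assms by simp
  fix N0 :: nat and V1 V2 :: "nat set" and R B
  assume "N0 \<ge> 0" and H: "finite V1 \<and> finite V2 \<and> V1 \<inter> V2 = {} \<and> card V1 = N0 \<and> card V2 = N0 \<and>
     bichromatic (V1 \<union> V2) R B \<and>
     R \<union> B = complete_bipartite_edges V1 V2 \<and>
     color_balanced \<epsilon> R B"
  define n where "n = N0"
  have fin: "finite V1" "finite V2" and dj: "V1 \<inter> V2 = {}" and c1: "card V1 = n" and c2: "card V2 = n"
    and RB: "R \<inter> B = {}" and E: "R \<union> B = complete_bipartite_edges V1 V2"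
    and cb: "color_balanced \<epsilon> R B"
    using H by (auto simp: n_def bichromatic_def)
  define PR where "PR = {(u,v). (u,v) \<in> V1 \<times> V2 \<and> {u,v} \<in> R}"
  define PB where "PB = {(u,v). (u,v) \<in> V1 \<times> V2 \<and> {u,v} \<in> B}"
  define L where "L = left_incidence_edges V1 V2 R B"
  define Rt where "Rt = right_incidence_edges V1 V2 R B"
  have cov: "\<And>u v. u \<in> V1 \<Longrightarrow> v \<in> V2 \<Longrightarrow> {u,v} \<in> R \<or> {u,v} \<in> B"
  proof -
    fix u v assume "u \<in> V1" "v \<in> V2"
    then have "{u,v} \<in> complete_bipartite_edges V1 V2"
      unfolding complete_bipartite_edges_def by blast
    then show "{u,v} \<in> R \<or> {u,v} \<in> B" using E by blast
  qed
  have key: "card PR * card PB \<le> n * (card L + card Rt)"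
    unfolding PR_def PB_def L_def Rt_def
    by (rule key_ineq[OF fin c1 c2 RB cov])
  have cR: "card R = card PR" unfolding PR_def
    by (rule card_edges_pairs[OF dj]) (use E in blast)
  have cB: "card B = card PB" unfolding PB_def
    by (rule card_edges_pairs[OF dj]) (use E in blast)
  have un: "PR \<union> PB = V1 \<times> V2" using cov by (auto simp: PR_def PB_def)
  have di: "PR \<inter> PB = {}" using RB by (auto simp: PR_def PB_def)
  have fP: "finite PR" "finite PB"
    using fin by (auto simp: PR_def PB_def intro: finite_subset[of _ "V1 \<times> V2"])
  have sum: "card PR + card PB = n * n"
    using card_Un_disjoint[OF fP di] un c1 c2 by (simp add: card_cartesian_product)
  define r where "r = real (card PR)"
  define b where "b = real (card PB)"
  have rb: "r + b = real n * real n" unfolding r_def b_def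
    using sum by (metis of_nat_add of_nat_mult)
  have d1: "\<epsilon> \<le> r / (r + b)" and d2: "r / (r + b) \<le> 1 - \<epsilon>"
    using cb unfolding color_balanced_def red_density_def r_def b_def cR cB by auto
  have npos: "n > 0"
  proof (rule ccontr)
    assume "\<not> n > 0"
    then have "r + b = 0" using rb by simp
    then show False using d1 assms by simp
  qed
  have tpos: "r + b > 0" using rb npos by simp
  have rge: "r \<ge> \<epsilon> * (r + b)" using d1 tpos by (simp add: field_simps)
  have bge: "b \<ge> \<epsilon> * (r + b)" using d2 tpos by (simp add: field_simps)
  have "(\<epsilon> * (r + b)) * (\<epsilon> * (r + b)) \<le> r * b"
    using rge bge assms tpos by (intro mult_mono) (auto simp: r_def)
  also have "r * b \<le> real n * (real (card L) + real (card Rt))"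
    using key unfolding r_def b_def by (metis of_nat_add of_nat_le_iff of_nat_mult)
  finally have "\<epsilon>^2 * real n ^ 4 \<le> real n * (real (card L) + real (card Rt))"
    unfolding rb by (simp add: power2_eq_square power4_eq_xxxx algebra_simps)
  then have "real n * (\<epsilon>^2 * real n ^ 3) \<le> real n * (real (card L) + real (card Rt))"
    by (simp add: power_Suc algebra_simps numeral_eq_Suc)
  then have "\<epsilon>^2 * real n ^ 3 \<le> real (card L) + real (card Rt)"
    using npos by simp
  then show "real (card (left_incidence_edges V1 V2 R B)) \<ge> \<epsilon>^2/2 * real N0 ^ 3 \<or>
         real (card (right_incidence_edges V1 V2 R B)) \<ge> \<epsilon>^2/2 * real N0 ^ 3"
    unfolding L_def Rt_def n_def by linarith
qed

end
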